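(* Let $f(n,k)$ be the number of sets of exactly $k$ distinct integers $1\le p_1<p_2<\cdots<p_k\le n$ with $p_1+\cdots+p_j\le p_{j+1}$ for $1\le j\le k-1$. Then $f(n,0)=1$ for all $n\ge0$, and for $n\ge1$, $k\ge1$, $$f(n,k)=\sum_{p=0}^{\min\{k-1,\,n-\gamma(k)\}}\ \sum_{m=p}^{n-\gamma(k)}\bigl(n-\gamma(k)+1-m\bigr)\,a(m,p),$$ where an empty sum (in particular when $n<\gamma(k)$) is $0$.
   Context: A partition $n=p_1+\cdots+p_k$ with $1\le p_1\le\cdots\le p_k$ is non-squashing if $p_1+\cdots+p_j\le p_{j+1}$ for all $1\le j\le k-1$. $a(m,p)$ is the number of non-squashing partitions of $m$ into exactly $p$ parts (with $a(0,0)=1$ for the empty partition and $a(m,0)=0$ for $m\ge1$). The function $\gamma$ is defined by $\gamma(i)=i$ for $1\le i\le3$ and $\gamma(i)=3\cdot2^{i-3}$ for $i\ge3$ (so $\gamma$ takes values $1,2,3,6,12,24,\dots$). *)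

theory Defs
  imports Main
begin

text \<open>Non-squashing condition on a list p_1,...,p_k (1-based in the paper, 0-based here):
  p_1 + ... + p_j <= p_(j+1) for 1 <= j <= k-1.\<close>
definition non_squashing :: "nat list \<Rightarrow> bool" where
  "non_squashing ps \<longleftrightarrow> (\<forall>j. 1 \<le> j \<and> j < length ps \<longrightarrow> sum_list (take j ps) \<le> ps ! j)"

definition a_ns :: "nat \<Rightarrow> nat \<Rightarrow> nat" where
  "a_ns m p = card {ps. length ps = p \<and> sum_list ps = m \<and> (\<forall>x\<in>set ps. 1 \<le> x)
                        \<and> sorted ps \<and> non_squashing ps}"

definition gamma :: "nat \<Rightarrow> nat" where
  "gamma i = (if i \<le> 3 then i else 3 * 2 ^ (i - 3))"

definition f_ns :: "nat \<Rightarrow> nat \<Rightarrow> nat" where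
  "f_ns n k = card {S. S \<subseteq> {1..n} \<and> card S = k \<and> non_squashing (sorted_list_of_set S)}"

end

theory Submission imports Defs begin

fun nsa :: "nat \<Rightarrow> nat list \<Rightarrow> bool" where
  "nsa s [] = True"
| "nsa s (x # xs) = (s \<le> x \<and> nsa (s + x) xs)"

lemma nsa_iff: "nsa s xs \<longleftrightarrow> (\<forall>j<length xs. s + sum_list (take j xs) \<le> xs ! j)"
  by (induction xs arbitrary: s) (auto simp: All_less_Suc2 add.assoc)

lemma ns_nsa: "non_squashing xs = nsa 0 xs"
proof (cases xs)
  case Nil then show ?thesis by (simp add: non_squashing_def)
next
  case (Cons x ys)
  have "non_squashing (x # ys) \<longleftrightarrow> (\<forall>j<length ys. x + sum_list (take j ys) \<le> ys ! j)"
    unfolding non_squashing_def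
  proof (intro iffI allI impI)
    fix j assume H: "\<forall>j. 1 \<le> j \<and> j < length (x # ys) \<longrightarrow> sum_list (take j (x # ys)) \<le> (x # ys) ! j"
      and j: "j < length ys"
    from H[rule_format, of "Suc j"] j show "x + sum_list (take j ys) \<le> ys ! j" by simp
  next
    fix j assume H: "\<forall>j<length ys. x + sum_list (take j ys) \<le> ys ! j"
      and j: "1 \<le> j \<and> j < length (x # ys)"
    from j obtain i where i: "j = Suc i" by (cases j) auto
    from i j have "i < length ys" by simp
    from H[rule_format, OF this] i show "sum_list (take j (x # ys)) \<le> (x # ys) ! j" by simp
  qed
  then show ?thesis using Cons by (simp add: nsa_iff[of x ys])
qed

lemma nsa_ge: "nsa s xs \<Longrightarrow> y \<in> set xs \<Longrightarrow> s \<le> y"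
proof (induction xs arbitrary: s)
  case (Cons x xs)
  show ?case
  proof (cases "y = x")
    case True with Cons.prems show ?thesis by simp
  next
    case False
    with Cons.prems have "y \<in> set xs" "nsa (s + x) xs" by auto
    from Cons.IH[OF this(2) this(1)] show ?thesis by simp
  qed
qed simp

lemma nsa_sorted: "nsa s xs \<Longrightarrow> sorted xs"
proof (induction xs arbitrary: s)
  case (Cons x xs)
  then have n: "nsa (s + x) xs" by simp
  have "\<forall>y\<in>set xs. x \<le> y" using nsa_ge[OF n] by fastforce
  with Cons.IH[OF n] show ?case by simp
qed simp

lemma nsa_strict: "0 < s \<Longrightarrow> nsa s xs \<Longrightarrow> sorted_wrt (<) xs"
proof (induction xs arbitrary: s)
  case (Cons x xs)
  then have n: "nsa (s + x) xs" by simp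
  have "\<forall>y\<in>set xs. s + x \<le> y" using nsa_ge[OF n] by blast
  then have "\<forall>y\<in>set xs. x < y" using Cons.prems(1) by fastforce
  with Cons.IH[of "s + x"] n Cons.prems(1) show ?case by simp
qed simp

lemma sorted_le_last: "sorted xs \<Longrightarrow> y \<in> set xs \<Longrightarrow> y \<le> last xs"
proof (induction xs)
  case (Cons a xs)
  show ?case
  proof (cases "xs = []")
    case True then show ?thesis using Cons by simp
  next
    case False
    then have "last xs \<in> set xs" by simp
    then show ?thesis using Cons False by auto
  qed
qed simp

lemma nsa_snoc: "nsa s (xs @ [x]) \<longleftrightarrow> nsa s xs \<and> s + sum_list xs \<le> x"
  by (induction xs arbitrary: s) (auto simp: add.assoc)

lemma nsa_zero_Cons: "nsa 0 (0 # xs) = nsa 0 xs" by simp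

lemma nsa_rep: "nsa 0 (replicate r 0 @ xs) = nsa 0 xs"
  by (induction r) auto

lemma nsa_split: "nsa 0 qs \<Longrightarrow> \<exists>r ps. qs = replicate r 0 @ ps \<and> (\<forall>x\<in>set ps. 0 < x) \<and> nsa 0 ps"
proof (induction qs)
  case Nil show ?case by (intro exI[of _ 0] exI[of _ "[]"]) simp
next
  case (Cons x xs)
  show ?case
  proof (cases "x = 0")
    case True
    with Cons.prems have "nsa 0 xs" by simp
    with Cons.IH obtain r ps where "xs = replicate r 0 @ ps" "\<forall>x\<in>set ps. 0 < x" "nsa 0 ps" by blast
    with True show ?thesis by (intro exI[of _ "Suc r"] exI[of _ ps]) simp
  next
    case False
    from Cons.prems have n: "nsa x xs" by simp
    have "\<forall>y\<in>set xs. 0 < y"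
    proof
      fix y assume "y \<in> set xs"
      from nsa_ge[OF n this] False show "0 < y" by simp
    qed
    with False Cons.prems show ?thesis by (intro exI[of _ 0] exI[of _ "x # xs"]) simp
  qed
qed

lemma gamma_123: "gamma 1 = 1" "gamma 2 = 2" "gamma 3 = 3"
  by (simp_all add: gamma_def)

lemma gamma_Suc0[simp]: "gamma (Suc 0) = 1" "gamma (Suc (Suc 0)) = 2" "gamma (Suc (Suc (Suc 0))) = 3"
  by (simp_all add: gamma_def)

lemma gamma_double: "2 \<le> i \<Longrightarrow> gamma (i + 2) = 2 * gamma (i + 1)"
proof -
  assume i: "2 \<le> i"
  then obtain j where j: "i = j + 2" by (metis add.commute le_Suc_ex)
  have "gamma (i + 2) = 3 * 2 ^ (j + 1)" unfolding gamma_def j by simp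
  moreover have "gamma (i + 1) = 3 * 2 ^ j" unfolding gamma_def j by simp
  ultimately show ?thesis by simp
qed

fun addg :: "nat \<Rightarrow> nat list \<Rightarrow> nat list" where
  "addg i [] = []"
| "addg i (q # qs) = (q + gamma (i + 1)) # addg (Suc i) qs"

lemma addg_length[simp]: "length (addg i qs) = length qs"
  by (induction qs arbitrary: i) auto

lemma addg_inj: "addg i xs = addg i ys \<Longrightarrow> xs = ys"
proof (induction xs arbitrary: i ys)
  case Nil then show ?case by (cases ys) auto
next
  case (Cons x xs) then show ?case by (cases ys) auto
qed

lemma addg_last: "qs \<noteq> [] \<Longrightarrow> last (addg i qs) = last qs + gamma (i + length qs)"
proof (induction qs arbitrary: i)
  case (Cons q qs)
  show ?case
  proof (cases qs)
    case Nil then show ?thesis by simp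
  next
    case (Cons a list)
    then have "addg (Suc i) qs \<noteq> []" by simp
    then show ?thesis using Cons.IH[of "Suc i"] Cons by simp
  qed
qed simp

lemma addg_nsa: "2 \<le> i \<Longrightarrow> nsa (s + gamma (i + 1)) (addg i qs) = nsa s qs"
proof (induction qs arbitrary: i s)
  case (Cons q qs)
  have g: "gamma (Suc (Suc i)) = gamma (Suc i) + gamma (Suc i)" using gamma_double[OF Cons.prems] by simp
  have "nsa (s + gamma (i + 1)) (addg i (q # qs)) =
        (s \<le> q \<and> nsa ((s + q) + gamma (Suc i + 1)) (addg (Suc i) qs))"
    by (simp add: g add.assoc add.left_commute)
  also have "\<dots> = nsa s (q # qs)" using Cons.IH[of "Suc i" "s + q"] Cons.prems by simp
  finally show ?case .
qed simp

lemma addg_exists: "2 \<le> i \<Longrightarrow> nsa t ps \<Longrightarrow> gamma (i + 1) \<le> t \<Longrightarrow>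
    \<exists>qs. ps = addg i qs \<and> nsa (t - gamma (i + 1)) qs"
proof (induction ps arbitrary: i t)
  case Nil then show ?case by (intro exI[of _ "[]"]) simp
next
  case (Cons x xs)
  have g: "gamma (Suc i + 1) = 2 * gamma (i + 1)" using gamma_double[OF Cons.prems(1)] by simp
  from Cons.prems have x: "t \<le> x" and n: "nsa (t + x) xs" by auto
  have "gamma (Suc i + 1) \<le> t + x" using g x Cons.prems(3) by simp
  then obtain qs where qs: "xs = addg (Suc i) qs" "nsa (t + x - gamma (Suc i + 1)) qs"
    using Cons.IH[of "Suc i" "t + x"] Cons.prems(1) n by auto
  have "x # xs = addg i ((x - gamma (i + 1)) # qs)" using qs x Cons.prems(3) by simp
  moreover have e: "t + x - gamma (Suc i + 1) = (t - gamma (i + 1)) + (x - gamma (i + 1))"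
    using g x Cons.prems(3) by simp
  moreover have "nsa (t - gamma (i + 1)) ((x - gamma (i + 1)) # qs)"
    using qs(2) x Cons.prems(3) unfolding e by simp
  ultimately show ?case by blast
qed

definition condP :: "nat list \<Rightarrow> bool" where
  "condP p \<longleftrightarrow> sorted_wrt (<) p \<and> (\<forall>x\<in>set p. 1 \<le> x) \<and> nsa 0 p"

lemma condP_addg: "nsa 0 q \<Longrightarrow> condP (addg 0 q)"
proof (cases q rule: remdups_adj.cases)
  case 1 then show ?thesis by (simp add: condP_def)
next
  case (2 x) then show ?thesis by (simp add: condP_def gamma_123)
next
  case (3 q0 q1 rest)
  assume n: "nsa 0 q"
  with 3 have a: "q0 \<le> q1" and b: "nsa (q0 + q1) rest" by auto
  have c: "nsa (q0 + q1 + 3) (addg 2 rest)"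
    using addg_nsa[of 2 "q0 + q1" rest] b by (simp add: gamma_123)
  have d: "\<forall>y\<in>set (addg 2 rest). q0 + q1 + 3 \<le> y" using nsa_ge[OF c] by blast
  have e: "sorted_wrt (<) (addg 2 rest)" using nsa_strict[OF _ c] by simp
  show ?thesis using 3 a c d e
    by (auto simp: condP_def gamma_123 numeral_2_eq_2 numeral_3_eq_3 add.assoc)
qed

lemma condP_exists: "condP p \<Longrightarrow> \<exists>q. p = addg 0 q \<and> nsa 0 q"
proof (cases p rule: remdups_adj.cases)
  case 1 then show ?thesis by (intro exI[of _ "[]"]) simp
next
  case (2 x)
  assume "condP p"
  with 2 show ?thesis by (intro exI[of _ "[x - 1]"]) (auto simp: condP_def gamma_123)
next
  case (3 p0 p1 rest)
  assume "condP p"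
  with 3 have a: "1 \<le> p0" "p0 < p1" and b: "nsa (p0 + p1) rest" by (auto simp: condP_def)
  obtain qs where qs: "rest = addg 2 qs" "nsa (p0 + p1 - 3) qs"
    using addg_exists[of 2 "p0 + p1" rest] b a by (auto simp: gamma_123)
  have "p = addg 0 ((p0 - 1) # (p1 - 2) # qs)"
    using 3 qs a by (simp add: gamma_123 numeral_2_eq_2)
  moreover have "nsa 0 ((p0 - 1) # (p1 - 2) # qs)" using qs a
    by (simp add: numeral_2_eq_2 numeral_3_eq_3)
  ultimately show ?thesis by blast
qed


lemma f_card:
  assumes k: "1 \<le> k"
  shows "f_ns n k = card {p. length p = k \<and> condP p \<and> last p \<le> n}"
proof -
  let ?S = "{S. S \<subseteq> {1..n} \<and> card S = k \<and> non_squashing (sorted_list_of_set S)}"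
  let ?P = "{p. length p = k \<and> condP p \<and> last p \<le> n}"
  have inj: "inj_on sorted_list_of_set ?S"
  proof (rule inj_onI)
    fix A B assume "A \<in> ?S" "B \<in> ?S" "sorted_list_of_set A = sorted_list_of_set B"
    moreover have "finite A" "finite B" using \<open>A \<in> ?S\<close> \<open>B \<in> ?S\<close> finite_subset by auto
    ultimately show "A = B" by (metis set_sorted_list_of_set)
  qed
  have img: "sorted_list_of_set ` ?S = ?P"
  proof (intro equalityI subsetI)
    fix p assume "p \<in> sorted_list_of_set ` ?S"
    then obtain S where S: "S \<in> ?S" and p: "p = sorted_list_of_set S" by blast
    have fin: "finite S" using S finite_subset by auto
    have u: "sorted_wrt (<) p \<and> set p = S \<and> length p = card S"
      using sorted_list_of_set_unique[OF fin] p by blast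
    then have "p \<noteq> []" using S k by auto
    then have "last p \<in> S" using u last_in_set by metis
    then have "last p \<le> n" using S by auto
    moreover have "condP p" using u S p by (auto simp: condP_def ns_nsa)
    ultimately show "p \<in> ?P" using u S by simp
  next
    fix p assume "p \<in> ?P"
    then have p: "length p = k" "condP p" "last p \<le> n" by auto
    then have sw: "sorted_wrt (<) p" and pos: "\<forall>x\<in>set p. 1 \<le> x" and ns: "nsa 0 p"
      by (auto simp: condP_def)
    have srt: "sorted p" using nsa_sorted[OF ns] .
    have dist: "distinct p" using sw strict_sorted_iff by blast
    have "set p \<subseteq> {1..n}"
    proof
      fix x assume "x \<in> set p"
      then show "x \<in> {1..n}" using pos sorted_le_last[OF srt] p(3) by force
    qed
    moreover have "card (set p) = k" using dist p(1) distinct_card by blast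
    moreover have "sorted_list_of_set (set p) = p"
      using sorted_list_of_set.idem_if_sorted_distinct[OF srt dist] .
    ultimately show "p \<in> sorted_list_of_set ` ?S" using ns
      by (intro image_eqI[of _ _ "set p"]) (auto simp: ns_nsa)
  qed
  show ?thesis unfolding f_ns_def using card_image[OF inj] img by simp
qed

lemma P_image:
  assumes k: "1 \<le> k"
  shows "{p. length p = k \<and> condP p \<and> last p \<le> n} =
         addg 0 ` {q. length q = k \<and> nsa 0 q \<and> last q + gamma k \<le> n}"
proof (intro equalityI subsetI)
  fix p assume "p \<in> {p. length p = k \<and> condP p \<and> last p \<le> n}"
  then have p: "length p = k" "condP p" "last p \<le> n" by auto
  obtain q where q: "p = addg 0 q" "nsa 0 q" using condP_exists[OF p(2)] by blast
  have lq: "length q = k" using q(1) p(1) by simp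
  have "q \<noteq> []" using lq k by auto
  then have "last p = last q + gamma k" using addg_last[of q 0] q(1) lq by simp
  then have "q \<in> {q. length q = k \<and> nsa 0 q \<and> last q + gamma k \<le> n}"
    using q(2) lq p(3) by simp
  then show "p \<in> addg 0 ` {q. length q = k \<and> nsa 0 q \<and> last q + gamma k \<le> n}"
    using q(1) by blast
next
  fix p assume "p \<in> addg 0 ` {q. length q = k \<and> nsa 0 q \<and> last q + gamma k \<le> n}"
  then obtain q where q: "p = addg 0 q" "length q = k" "nsa 0 q" "last q + gamma k \<le> n" by auto
  have "q \<noteq> []" using q(2) k by auto
  then have "last p = last q + gamma k" using addg_last[of q 0] q(1,2) by simp
  moreover have "condP p" using q(1) condP_addg[OF q(3)] by simp
  moreover have "length p = k" using q(1,2) by simp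
  ultimately show "p \<in> {p. length p = k \<and> condP p \<and> last p \<le> n}"
    using q(4) by simp
qed

lemma f_card2:
  assumes k: "1 \<le> k"
  shows "f_ns n k = card {q. length q = k \<and> nsa 0 q \<and> last q + gamma k \<le> n}"
proof -
  have "inj_on (addg 0) {q. length q = k \<and> nsa 0 q \<and> last q + gamma k \<le> n}"
    by (meson addg_inj inj_onI)
  then have "card (addg 0 ` {q. length q = k \<and> nsa 0 q \<and> last q + gamma k \<le> n}) =
      card {q. length q = k \<and> nsa 0 q \<and> last q + gamma k \<le> n}" by (rule card_image)
  then show ?thesis using f_card[OF k] P_image[OF k] by simp
qed

lemma sum_ge_length: "(\<forall>x\<in>set ps. 1 \<le> x) \<Longrightarrow> length ps \<le> sum_list ps"
  by (induction ps) auto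

lemma elem_le_sum: "x \<in> set (xs :: nat list) \<Longrightarrow> x \<le> sum_list xs"
  using member_le_sum_list by blast

lemma R_finite: "finite {qs. length qs = k \<and> nsa 0 qs \<and> sum_list qs \<le> (N::nat)}"
proof (rule finite_subset)
  show "{qs. length qs = k \<and> nsa 0 qs \<and> sum_list qs \<le> N} \<subseteq> {xs. set xs \<subseteq> {0..N} \<and> length xs = k}"
    using elem_le_sum by fastforce
  show "finite {xs. set xs \<subseteq> {0..N} \<and> length xs = k}" by (rule finite_lists_length_eq) simp
qed

lemma Q_count:
  "card {q. length q = Suc k \<and> nsa 0 q \<and> last q \<le> N} =
   (\<Sum>qs\<in>{qs. length qs = k \<and> nsa 0 qs \<and> sum_list qs \<le> N}. Suc N - sum_list qs)"
proof -
  let ?R = "{qs. length qs = k \<and> nsa 0 qs \<and> sum_list qs \<le> N}"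
  let ?Sg = "SIGMA qs:?R. {sum_list qs..N}"
  have eq: "{q. length q = Suc k \<and> nsa 0 q \<and> last q \<le> N} = (\<lambda>(qs, x). qs @ [x]) ` ?Sg"
  proof (intro equalityI subsetI)
    fix q assume "q \<in> {q. length q = Suc k \<and> nsa 0 q \<and> last q \<le> N}"
    then have q: "length q = Suc k" "nsa 0 q" "last q \<le> N" by auto
    then have ne: "q \<noteq> []" by auto
    have qq: "q = butlast q @ [last q]" using append_butlast_last_id[OF ne] by simp
    have "nsa 0 (butlast q @ [last q])" using q qq by simp
    then have "nsa 0 (butlast q)" "sum_list (butlast q) \<le> last q" by (simp_all add: nsa_snoc)
    then have "(butlast q, last q) \<in> ?Sg" using q by auto
    then show "q \<in> (\<lambda>(qs, x). qs @ [x]) ` ?Sg" using qq by force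
  next
    fix q assume "q \<in> (\<lambda>(qs, x). qs @ [x]) ` ?Sg"
    then obtain qs x where "q = qs @ [x]" "(qs, x) \<in> ?Sg" by auto
    then show "q \<in> {q. length q = Suc k \<and> nsa 0 q \<and> last q \<le> N}"
      by (auto simp: nsa_snoc)
  qed
  have inj: "inj_on (\<lambda>(qs, x). qs @ [x]) ?Sg"
    by (rule inj_onI) auto
  have fin: "finite ?Sg" using R_finite by auto
  have "card {q. length q = Suc k \<and> nsa 0 q \<and> last q \<le> N} = card ?Sg"
    using eq card_image[OF inj] by simp
  also have "\<dots> = (\<Sum>qs\<in>?R. card {sum_list qs..N})"
    by (rule card_SigmaI) (use R_finite in auto)
  also have "\<dots> = (\<Sum>qs\<in>?R. Suc N - sum_list qs)" by simp
  finally show ?thesis .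
qed


definition Aset :: "nat \<Rightarrow> nat \<Rightarrow> nat list set" where
  "Aset m p = {ps. length ps = p \<and> sum_list ps = m \<and> (\<forall>x\<in>set ps. 1 \<le> x) \<and> sorted ps \<and> nsa 0 ps}"

lemma a_ns_Aset: "a_ns m p = card (Aset m p)"
  unfolding a_ns_def Aset_def by (simp add: ns_nsa)

lemma Aset_finite: "finite (Aset m p)"
proof (rule finite_subset)
  show "Aset m p \<subseteq> {xs. set xs \<subseteq> {0..m} \<and> length xs = p}"
    unfolding Aset_def using elem_le_sum by fastforce
  show "finite {xs. set xs \<subseteq> {0..m} \<and> length xs = p}" by (rule finite_lists_length_eq) simp
qed

lemma a_zero: "m < p \<Longrightarrow> a_ns m p = 0"
proof -
  assume mp: "m < p"
  have "Aset m p = {}"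
  proof (rule ccontr)
    assume "Aset m p \<noteq> {}"
    then obtain ps where "ps \<in> Aset m p" by blast
    then have "length ps = p" "sum_list ps = m" "\<forall>x\<in>set ps. 1 \<le> x" by (auto simp: Aset_def)
    with sum_ge_length[of ps] mp show False by simp
  qed
  then show ?thesis by (simp add: a_ns_Aset)
qed

lemma C_count:
  "card {qs. length qs = k \<and> nsa 0 qs \<and> sum_list qs = m} = (\<Sum>p\<in>{..k}. a_ns m p)"
proof -
  let ?h = "\<lambda>p ps. replicate (k - p) (0::nat) @ ps"
  have eq: "{qs. length qs = k \<and> nsa 0 qs \<and> sum_list qs = m} = (\<Union>p\<in>{..k}. ?h p ` Aset m p)"
  proof (intro equalityI subsetI)
    fix qs assume "qs \<in> {qs. length qs = k \<and> nsa 0 qs \<and> sum_list qs = m}"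
    then have q: "length qs = k" "nsa 0 qs" "sum_list qs = m" by auto
    obtain r ps where rp: "qs = replicate r 0 @ ps" "\<forall>x\<in>set ps. 0 < x" "nsa 0 ps"
      using nsa_split[OF q(2)] by blast
    have lp: "length ps \<le> k" "r = k - length ps" using rp(1) q(1) by auto
    have "ps \<in> Aset m (length ps)"
      unfolding Aset_def using rp q(3) nsa_sorted[OF rp(3)] by (auto simp: Suc_le_eq)
    then show "qs \<in> (\<Union>p\<in>{..k}. ?h p ` Aset m p)" using lp rp(1) by blast
  next
    fix qs assume "qs \<in> (\<Union>p\<in>{..k}. ?h p ` Aset m p)"
    then obtain p ps where "p \<le> k" "ps \<in> Aset m p" "qs = ?h p ps" by blast
    then show "qs \<in> {qs. length qs = k \<and> nsa 0 qs \<and> sum_list qs = m}"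
      by (auto simp: Aset_def nsa_rep)
  qed
  have filt: "ps \<in> Aset m p \<Longrightarrow> filter (\<lambda>x. 0 < x) (?h p ps) = ps" for p ps
    unfolding Aset_def by (auto simp: filter_replicate Suc_le_eq intro!: filter_True)
  have disj: "\<forall>i\<in>{..k}. \<forall>j\<in>{..k}. i \<noteq> j \<longrightarrow> ?h i ` Aset m i \<inter> ?h j ` Aset m j = {}"
  proof (intro ballI impI)
    fix i j :: nat assume "i \<noteq> j"
    show "?h i ` Aset m i \<inter> ?h j ` Aset m j = {}"
    proof (rule ccontr)
      assume "?h i ` Aset m i \<inter> ?h j ` Aset m j \<noteq> {}"
      then obtain a b where ab: "a \<in> Aset m i" "b \<in> Aset m j" "?h i a = ?h j b" by blast
      then have "a = b" using filt[OF ab(1)] filt[OF ab(2)] by metis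
      then show False using ab \<open>i \<noteq> j\<close> by (auto simp: Aset_def)
    qed
  qed
  have card_eq: "card (?h p ` Aset m p) = card (Aset m p)" for p
    by (rule card_image) (auto intro: inj_onI)
  have "card (\<Union>p\<in>{..k}. ?h p ` Aset m p) = (\<Sum>p\<in>{..k}. card (?h p ` Aset m p))"
    by (rule card_UN_disjoint) (use disj Aset_finite in auto)
  then show ?thesis using eq card_eq a_ns_Aset by simp
qed

lemma main_nat:
  "card {q. length q = Suc k \<and> nsa 0 q \<and> last q \<le> N} =
   (\<Sum>m\<in>{..N}. (Suc N - m) * (\<Sum>p\<in>{..k}. a_ns m p))"
proof -
  let ?R = "{qs. length qs = k \<and> nsa 0 qs \<and> sum_list qs \<le> N}"
  have "(\<Sum>qs\<in>?R. Suc N - sum_list qs) =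
        (\<Sum>m\<in>{..N}. \<Sum>qs\<in>{qs \<in> ?R. sum_list qs = m}. Suc N - sum_list qs)"
    by (rule sum.group[symmetric]) (use R_finite in auto)
  also have "\<dots> = (\<Sum>m\<in>{..N}. (Suc N - m) * card {qs. length qs = k \<and> nsa 0 qs \<and> sum_list qs = m})"
  proof (rule sum.cong[OF refl])
    fix m assume "m \<in> {..N}"
    then have "{qs \<in> ?R. sum_list qs = m} = {qs. length qs = k \<and> nsa 0 qs \<and> sum_list qs = m}" by auto
    then show "(\<Sum>qs\<in>{qs \<in> ?R. sum_list qs = m}. Suc N - sum_list qs) =
        (Suc N - m) * card {qs. length qs = k \<and> nsa 0 qs \<and> sum_list qs = m}" by simp
  qed
  finally show ?thesis using Q_count C_count by simp
qed

lemma reorg: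
  "(\<Sum>m\<in>{..N}. (Suc N - m) * (\<Sum>p\<in>{..k}. a_ns m p)) =
   (\<Sum>p\<in>{0..min k N}. \<Sum>m\<in>{p..N}. (Suc N - m) * a_ns m p)"
proof -
  define F where "F p = (\<Sum>m\<in>{p..N}. (Suc N - m) * a_ns m p)" for p
  have "(\<Sum>m\<in>{..N}. (Suc N - m) * (\<Sum>p\<in>{..k}. a_ns m p)) =
        (\<Sum>p\<in>{..k}. \<Sum>m\<in>{..N}. (Suc N - m) * a_ns m p)"
    by (simp add: sum_distrib_left sum.swap[of _ "{..N}"])
  also have "\<dots> = (\<Sum>p\<in>{..k}. F p)"
  proof (rule sum.cong[OF refl])
    fix p
    show "(\<Sum>m\<in>{..N}. (Suc N - m) * a_ns m p) = F p"
      unfolding F_def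
      by (rule sum.mono_neutral_right) (auto simp: a_zero)
  qed
  also have "\<dots> = (\<Sum>p\<in>{0..min k N}. F p)"
    by (rule sum.mono_neutral_right) (auto simp: F_def)
  finally show ?thesis by (simp add: F_def)
qed

lemma int_sum_interval: "(\<Sum>i\<in>{int a..int b}. g i) = (\<Sum>j\<in>{a..b}. g (int j))"
proof -
  have "(\<Sum>i\<in>{int a..int b}. g i) = (\<Sum>i\<in>int ` {a..b}. g i)" by (simp add: image_int_atLeastAtMost)
  also have "\<dots> = (\<Sum>j\<in>{a..b}. g (int j))" by (rule sum.reindex_cong[OF _ refl refl]) (simp add: inj_on_def)
  finally show ?thesis .
qed

lemma f_zero: "f_ns n 0 = 1"
proof -
  have "{S. S \<subseteq> {1..n} \<and> card S = 0 \<and> non_squashing (sorted_list_of_set S)} = {{}}"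
  proof (intro equalityI subsetI)
    fix S assume "S \<in> {S. S \<subseteq> {1..n} \<and> card S = 0 \<and> non_squashing (sorted_list_of_set S)}"
    then have "S \<subseteq> {1..n}" "card S = 0" by auto
    then have "S = {}" using finite_subset by fastforce
    then show "S \<in> {{}}" by simp
  next
    fix S assume "S \<in> {{}::nat set}"
    then show "S \<in> {S. S \<subseteq> {1..n} \<and> card S = 0 \<and> non_squashing (sorted_list_of_set S)}"
      by (simp add: non_squashing_def)
  qed
  then show ?thesis by (simp add: f_ns_def)
qed

theorem theorem8:
  shows "(\<forall>n. f_ns n 0 = 1) \<and>
    (\<forall>n k. 1 \<le> n \<longrightarrow> 1 \<le> k \<longrightarrow>
       int (f_ns n k) =
         (\<Sum>p\<in>{0..min (int k - 1) (int n - int (gamma k))}.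
            \<Sum>m\<in>{p..int n - int (gamma k)}.
               (int n - int (gamma k) + 1 - m) * int (a_ns (nat m) (nat p))))"
proof (intro conjI allI impI)
  fix n show "f_ns n 0 = 1" by (rule f_zero)
next
  fix n k :: nat assume "1 \<le> n" and k: "1 \<le> k"
  then obtain k' where k': "k = Suc k'" by (cases k) auto
  have f: "f_ns n k = card {q. length q = k \<and> nsa 0 q \<and> last q + gamma k \<le> n}"
    by (rule f_card2[OF k])
  show "int (f_ns n k) =
         (\<Sum>p\<in>{0..min (int k - 1) (int n - int (gamma k))}.
            \<Sum>m\<in>{p..int n - int (gamma k)}.
               (int n - int (gamma k) + 1 - m) * int (a_ns (nat m) (nat p)))"
  proof (cases "gamma k \<le> n")
    case False
    then have "{q. length q = k \<and> nsa 0 q \<and> last q + gamma k \<le> n} = {}" by auto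
    then have "f_ns n k = 0" using f by (metis card.empty)
    moreover have "min (int k - 1) (int n - int (gamma k)) < 0" using False by simp
    ultimately show ?thesis by simp
  next
    case True
    define N where "N = n - gamma k"
    have iN: "int n - int (gamma k) = int N" using True N_def by simp
    have ik: "int k - 1 = int k'" using k' by simp
    have "{q. length q = k \<and> nsa 0 q \<and> last q + gamma k \<le> n} =
          {q. length q = Suc k' \<and> nsa 0 q \<and> last q \<le> N}" using True k' N_def by auto
    then have "f_ns n k = (\<Sum>p\<in>{0..min k' N}. \<Sum>m\<in>{p..N}. (Suc N - m) * a_ns m p)"
      using f main_nat reorg by simp
    then have L0: "int (f_ns n k) = (\<Sum>p\<in>{0..min k' N}. \<Sum>m\<in>{p..N}. int ((Suc N - m) * a_ns m p))"
      by (simp add: of_nat_sum)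
    have L: "int (f_ns n k) = (\<Sum>p\<in>{0..min k' N}. \<Sum>m\<in>{p..N}. (int N + 1 - int m) * int (a_ns m p))"
      unfolding L0
    proof (intro sum.cong refl)
      fix p m assume "m \<in> {p..N}"
      then have "m \<le> N" by simp
      then show "int ((Suc N - m) * a_ns m p) = (int N + 1 - int m) * int (a_ns m p)"
        by (simp add: of_nat_diff)
    qed
    have "(\<Sum>p\<in>{0..min (int k - 1) (int n - int (gamma k))}.
            \<Sum>m\<in>{p..int n - int (gamma k)}.
               (int n - int (gamma k) + 1 - m) * int (a_ns (nat m) (nat p))) =
          (\<Sum>p\<in>{int 0..int (min k' N)}.
            \<Sum>m\<in>{p..int N}. (int N + 1 - m) * int (a_ns (nat m) (nat p)))"
      unfolding iN ik by simp
    also have "\<dots> = (\<Sum>p\<in>{0..min k' N}. \<Sum>m\<in>{int p..int N}. (int N + 1 - m) * int (a_ns (nat m) p))"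
      by (simp only: int_sum_interval nat_int)
    also have "\<dots> = (\<Sum>p\<in>{0..min k' N}. \<Sum>m\<in>{p..N}. (int N + 1 - int m) * int (a_ns m p))"
      by (simp only: int_sum_interval nat_int)
    finally show ?thesis using L by simp
  qed
qed

end
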